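(* Let $\bullet\in\{0,L_p,L,1_p,1\}$, $\mathbf{x}_0\in\mathbb{R}^d$, $\mathbf{A}\in C^\bullet_{\mathbf{x}_0}(\mathbb{R}^d,\mathbb{R}^{m\times n})$, $\mu\in(0,\infty)$ and $\nu\in\mathbb{N}\cup\{0\}$. Define $\lambda:\mathbb{R}^d\to(0,\infty]$ by $\lambda^2(\mathbf{x})=\mu^2/|(\mathbf{A}\mathbf{A}^T)(\mathbf{x})|^\nu$ if $|(\mathbf{A}\mathbf{A}^T)(\mathbf{x})|^\nu>0$ and $\lambda^2(\mathbf{x})=\infty$ otherwise. Then the map $\mathbf{x}\mapsto\mathbf{A}(\mathbf{x})^{*(\lambda(\mathbf{x}))}$ belongs to $C^\bullet_{\mathbf{x}_0}(\mathbb{R}^d,\mathbb{R}^{n\times m})$.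
   Context: $|\cdot|$ denotes the determinant, with $0^0=1$. Damped pseudoinverse: $\mathbf{A}^{*(\lambda)}=\mathbf{A}^T(\mathbf{A}\mathbf{A}^T+\lambda^2\mathbf{I}_m)^+$ for $\lambda<\infty$ and $\mathbf{A}^{*(\infty)}=\mathbf{0}$. Regularity classes: $f\in C^\bullet_{x_0}$ means, respectively, ($0$) continuous at $x_0$; ($L_p$) there are $r>0,L\ge0$ with $\|f(x)-f(x_0)\|\le L\|x-x_0\|$ for $\|x-x_0\|\le r$; ($L$) Lipschitz on a neighborhood of $x_0$; ($1_p$) Fréchet differentiable at $x_0$; ($1$) differentiable on a neighborhood of $x_0$ with derivative continuous at $x_0$. *)

theory Defs
  imports "HOL-Analysis.Analysis"
begin

definition pinv :: "real^'n^'m \<Rightarrow> real^'m^'n" where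
  "pinv A = (THE X. A ** X ** A = A \<and> X ** A ** X = X \<and>
                    transpose (A ** X) = A ** X \<and> transpose (X ** A) = X ** A)"

definition damped_pinv :: "real^'n^'m \<Rightarrow> ereal \<Rightarrow> real^'m^'n" where
  "damped_pinv A lam = (if lam = \<infinity> then 0
     else transpose A ** pinv (A ** transpose A + ((real_of_ereal lam)\<^sup>2) *\<^sub>R mat 1))"

datatype regclass = Reg0 | RegLp | RegL | Reg1p | Reg1

fun regular_at :: "regclass \<Rightarrow> ('a::real_normed_vector \<Rightarrow> 'b::real_normed_vector) \<Rightarrow> 'a \<Rightarrow> bool" where
  "regular_at Reg0 f x0 = continuous (at x0) f"
| "regular_at RegLp f x0 = (\<exists>r>0. \<exists>L\<ge>0. \<forall>x. norm (x - x0) \<le> r \<longrightarrow>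
        norm (f x - f x0) \<le> L * norm (x - x0))"
| "regular_at RegL f x0 = (\<exists>U. open U \<and> x0 \<in> U \<and> (\<exists>L. L-lipschitz_on U f))"
| "regular_at Reg1p f x0 = (f differentiable (at x0))"
| "regular_at Reg1 f x0 = (\<exists>U f'. open U \<and> x0 \<in> U \<and>
        (\<forall>x\<in>U. (f has_derivative blinfun_apply (f' x)) (at x)) \<and> continuous (at x0) f')"

definition damping :: "real \<Rightarrow> nat \<Rightarrow> real^'n^'m \<Rightarrow> ereal" where
  "damping \<mu> \<nu> M = (if det (M ** transpose M) ^ \<nu> > 0
      then ereal (sqrt (\<mu>\<^sup>2 / det (M ** transpose M) ^ \<nu>)) else \<infinity>)"

end

theory Submission
  imports Defs
begin


definition C1 :: "('a::euclidean_space \<Rightarrow> 'b::real_normed_vector) \<Rightarrow> bool" where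
  "C1 f \<longleftrightarrow> (\<exists>f'. (\<forall>x. (f has_derivative blinfun_apply (f' x)) (at x)) \<and> continuous_on UNIV f')"

lemma C1_cont: "C1 f \<Longrightarrow> continuous_on UNIV f"
  unfolding C1_def
  by (meson continuous_at_imp_continuous_on has_derivative_continuous)

lemma C1_const: "C1 (\<lambda>x. c)"
  unfolding C1_def
  by (rule exI[of _ "\<lambda>x. 0"]) (auto intro!: derivative_eq_intros)

lemma C1_bl: "bounded_linear L \<Longrightarrow> C1 L"
  unfolding C1_def
  by (rule exI[of _ "\<lambda>x. Blinfun L"])
    (auto simp: bounded_linear_Blinfun_apply intro!: bounded_linear_imp_has_derivative)

lemma C1_compose_bl:
  assumes L: "bounded_linear L" and f: "C1 f"
  shows "C1 (\<lambda>x. L (f x))"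
proof -
  from f obtain F where F: "\<And>x. (f has_derivative blinfun_apply (F x)) (at x)" "continuous_on UNIV F"
    unfolding C1_def by blast
  show ?thesis unfolding C1_def
  proof (intro exI[of _ "\<lambda>x. Blinfun L o\<^sub>L F x"] conjI allI)
    fix x show "((\<lambda>x. L (f x)) has_derivative blinfun_apply (Blinfun L o\<^sub>L F x)) (at x)"
    proof -
      have "blinfun_apply (Blinfun L o\<^sub>L F x) = (\<lambda>h. L (F x h))"
        by (rule ext) (simp add: bounded_linear_Blinfun_apply[OF L])
      then show ?thesis using bounded_linear.has_derivative[OF L F(1)[of x]] by simp
    qed
  next
    show "continuous_on UNIV (\<lambda>x. Blinfun L o\<^sub>L F x)"
      by (rule bounded_bilinear.continuous_on[OF bounded_bilinear_blinfun_compose])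
         (auto intro: F(2))
  qed
qed

lemma C1_add:
  assumes f: "C1 f" and g: "C1 g"
  shows "C1 (\<lambda>x. f x + g x)"
proof -
  from f obtain F where F: "\<And>x. (f has_derivative blinfun_apply (F x)) (at x)" "continuous_on UNIV F"
    unfolding C1_def by blast
  from g obtain G where G: "\<And>x. (g has_derivative blinfun_apply (G x)) (at x)" "continuous_on UNIV G"
    unfolding C1_def by blast
  show ?thesis unfolding C1_def
    apply (rule exI[of _ "\<lambda>x. F x + G x"])
    using F G by (auto intro!: continuous_on_add has_derivative_add simp: plus_blinfun.rep_eq)
qed

lemma C1_scaleR:
  fixes f :: "'a::euclidean_space \<Rightarrow> real"
  assumes f: "C1 f" and g: "C1 g"
  shows "C1 (\<lambda>x. f x *\<^sub>R g x)"
proof -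
  from f obtain F where F: "\<And>x. (f has_derivative blinfun_apply (F x)) (at x)" "continuous_on UNIV F"
    unfolding C1_def by blast
  from g obtain G where G: "\<And>x. (g has_derivative blinfun_apply (G x)) (at x)" "continuous_on UNIV G"
    unfolding C1_def by blast
  have cf: "continuous_on UNIV f" and cg: "continuous_on UNIV g" using C1_cont f g by auto
  show ?thesis unfolding C1_def
  proof (intro exI[of _ "\<lambda>x. f x *\<^sub>R G x + (blinfun_scaleR_left (g x) o\<^sub>L F x)"] conjI allI)
    fix x
    show "((\<lambda>x. f x *\<^sub>R g x) has_derivative blinfun_apply (f x *\<^sub>R G x + (blinfun_scaleR_left (g x) o\<^sub>L F x))) (at x)"
      using has_derivative_scaleR[OF F(1)[of x] G(1)[of x]]
      by (simp add: plus_blinfun.rep_eq scaleR_blinfun.rep_eq)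
  next
    have "continuous_on UNIV (\<lambda>x. blinfun_scaleR_left (g x))"
      by (rule bounded_linear.continuous_on[OF bounded_linear_blinfun_scaleR_left cg])
    then show "continuous_on UNIV (\<lambda>x. f x *\<^sub>R G x + (blinfun_scaleR_left (g x) o\<^sub>L F x))"
      by (intro continuous_on_add continuous_on_scaleR cf G(2)
            bounded_bilinear.continuous_on[OF bounded_bilinear_blinfun_compose] F(2))
  qed
qed

lemma C1_mult:
  fixes f g :: "'a::euclidean_space \<Rightarrow> real"
  assumes f: "C1 f" and g: "C1 g"
  shows "C1 (\<lambda>x. f x * g x)"
  using C1_scaleR[OF f g] by simp

lemma C1_inverse:
  fixes f :: "'a::euclidean_space \<Rightarrow> real"
  assumes f: "C1 f" and nz: "\<And>x. f x \<noteq> 0"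
  shows "C1 (\<lambda>x. inverse (f x))"
proof -
  from f obtain F where F: "\<And>x. (f has_derivative blinfun_apply (F x)) (at x)" "continuous_on UNIV F"
    unfolding C1_def by blast
  have cf: "continuous_on UNIV f" using C1_cont f by auto
  show ?thesis unfolding C1_def
  proof (intro exI[of _ "\<lambda>x. (- ((inverse (f x))^2)) *\<^sub>R F x"] conjI allI)
    fix x
    have "((\<lambda>x. inverse (f x)) has_derivative (\<lambda>h. - (inverse (f x) * F x h * inverse (f x)))) (at x)"
      by (rule Deriv.has_derivative_inverse[OF nz F(1)])
    moreover have "(\<lambda>h. - (inverse (f x) * F x h * inverse (f x))) = blinfun_apply ((- ((inverse (f x))^2)) *\<^sub>R F x)"
      by (rule ext) (simp add: power2_eq_square uminus_blinfun.rep_eq scaleR_blinfun.rep_eq)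
    ultimately show "((\<lambda>x. inverse (f x)) has_derivative blinfun_apply ((- ((inverse (f x))^2)) *\<^sub>R F x)) (at x)"
      by simp
  next
    show "continuous_on UNIV (\<lambda>x. (- ((inverse (f x))^2)) *\<^sub>R F x)"
      using nz by (intro continuous_intros cf F(2)) auto
  qed
qed

lemma C1_divide:
  fixes f g :: "'a::euclidean_space \<Rightarrow> real"
  assumes "C1 f" "C1 g" "\<And>x. g x \<noteq> 0"
  shows "C1 (\<lambda>x. f x / g x)"
  using C1_mult[OF assms(1) C1_inverse[OF assms(2,3)]] by (simp add: divide_inverse)

lemma C1_sum:
  assumes "finite S" "\<And>i. i \<in> S \<Longrightarrow> C1 (f i)"
  shows "C1 (\<lambda>x. \<Sum>i\<in>S. f i x)"
  using assms by (induction S rule: finite_induct) (auto intro: C1_const C1_add)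

lemma C1_prod:
  fixes f :: "'i \<Rightarrow> 'a::euclidean_space \<Rightarrow> real"
  assumes "finite S" "\<And>i. i \<in> S \<Longrightarrow> C1 (f i)"
  shows "C1 (\<lambda>x. \<Prod>i\<in>S. f i x)"
  using assms by (induction S rule: finite_induct) (auto intro: C1_const C1_mult)

lemma C1_power:
  fixes f :: "'a::euclidean_space \<Rightarrow> real"
  assumes "C1 f"
  shows "C1 (\<lambda>x. f x ^ n)"
  by (induction n) (auto intro: C1_const C1_mult assms)

lemma C1_vec:
  fixes f :: "'a::euclidean_space \<Rightarrow> 'b::euclidean_space ^'n"
  assumes "\<And>i. C1 (\<lambda>x. f x $ i)"
  shows "C1 f"
proof -
  have eq: "f = (\<lambda>x. \<Sum>b\<in>Basis. (f x \<bullet> b) *\<^sub>R b)"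
    by (simp add: euclidean_representation)
  have "C1 (\<lambda>x. (f x \<bullet> b) *\<^sub>R b)" if "b \<in> Basis" for b
  proof -
    from that obtain i u where b: "b = axis i u" "u \<in> Basis" by (auto simp: Basis_vec_def)
    have "C1 (\<lambda>x. (f x $ i \<bullet> u) *\<^sub>R b)"
      by (intro C1_scaleR C1_const C1_compose_bl[OF bounded_linear_inner_left assms])
    then show ?thesis by (simp add: b inner_axis inner_commute)
  qed
  then show ?thesis
    by (subst eq) (auto intro!: C1_sum)
qed

lemma C1_nth:
  fixes f :: "'a::euclidean_space \<Rightarrow> 'b::real_normed_vector ^'n"
  assumes "C1 f" shows "C1 (\<lambda>x. f x $ i)"
  by (rule C1_compose_bl[OF bounded_linear_vec_nth assms])

lemma C1_det:
  fixes F :: "'a::euclidean_space \<Rightarrow> real^'n^'n"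
  assumes "\<And>i j. C1 (\<lambda>x. F x $ i $ j)"
  shows "C1 (\<lambda>x. det (F x))"
  unfolding det_def
  by (auto intro!: C1_sum C1_mult C1_const C1_prod assms simp: finite_permutations)

lemma C1_entry: "C1 (\<lambda>M::real^'n^'m. M $ i $ j)"
  by (intro C1_nth C1_bl bounded_linear_ident)



lemma C1_loc_lip:
  fixes g :: "'a::euclidean_space \<Rightarrow> 'b::real_normed_vector"
  assumes "C1 g"
  shows "\<exists>B\<ge>0. \<forall>x\<in>cball y 1. \<forall>z\<in>cball y 1. norm (g x - g z) \<le> B * norm (x - z)"
proof -
  from assms obtain G where G: "\<And>x. (g has_derivative blinfun_apply (G x)) (at x)" "continuous_on UNIV G"
    unfolding C1_def by blast
  have "compact (G ` cball y 1)"
    by (rule compact_continuous_image) (auto intro: continuous_on_subset[OF G(2)])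
  then obtain B where B: "B > 0" "\<And>x. x \<in> cball y 1 \<Longrightarrow> norm (G x) \<le> B"
    using compact_imp_bounded bounded_pos by (metis imageI)
  have "norm (g x - g z) \<le> B * norm (x - z)" if "x \<in> cball y 1" "z \<in> cball y 1" for x z
    by (rule differentiable_bound[of "cball y 1" g "\<lambda>x. blinfun_apply (G x)"])
       (use that B G(1) in \<open>auto intro: has_derivative_at_withinI simp: norm_blinfun.rep_eq[symmetric]\<close>)
  then show ?thesis using B by (intro exI[of _ B]) auto
qed

lemma reg_transfer:
  fixes A :: "'a::euclidean_space \<Rightarrow> 'b::euclidean_space" and g :: "'b \<Rightarrow> 'c::real_normed_vector"
  assumes reg: "regular_at reg A x0" and g: "C1 g"
  shows "regular_at reg (\<lambda>x. g (A x)) x0"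
proof -
  from g obtain G where G: "\<And>x. (g has_derivative blinfun_apply (G x)) (at x)" "continuous_on UNIV G"
    unfolding C1_def by blast
  have gc: "isCont g y" for y
    using C1_cont[OF g] continuous_on_eq_continuous_at[OF open_UNIV] by blast
  have Gc: "isCont G y" for y
    using G(2) continuous_on_eq_continuous_at[OF open_UNIV] by blast
  show ?thesis
  proof (cases reg)
    case Reg0
    then show ?thesis using reg gc
      by (auto intro: continuous_at_compose[unfolded o_def])
  next
    case RegLp
    then obtain r L where rL: "r > 0" "L \<ge> 0"
      "\<And>x. norm (x - x0) \<le> r \<Longrightarrow> norm (A x - A x0) \<le> L * norm (x - x0)"
      using reg by auto
    obtain B where B: "B \<ge> 0" "\<And>x z. x \<in> cball (A x0) 1 \<Longrightarrow> z \<in> cball (A x0) 1 \<Longrightarrow>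
        norm (g x - g z) \<le> B * norm (x - z)"
      using C1_loc_lip[OF g, of "A x0"] by blast
    define r' where "r' = min r (1 / (L + 1))"
    have r': "r' > 0" using rL unfolding r'_def by auto
    have "norm (g (A x) - g (A x0)) \<le> (B * L) * norm (x - x0)" if x: "norm (x - x0) \<le> r'" for x
    proof -
      have 1: "norm (A x - A x0) \<le> L * norm (x - x0)" using rL(3)[of x] x unfolding r'_def by auto
      have "L * norm (x - x0) \<le> L * (1 / (L + 1))"
        using x rL(2) unfolding r'_def by (intro mult_left_mono) auto
      also have "\<dots> \<le> 1" using rL(2) by (simp add: field_simps)
      finally have "A x \<in> cball (A x0) 1" using 1 by (simp add: dist_norm norm_minus_commute)
      then have "norm (g (A x) - g (A x0)) \<le> B * norm (A x - A x0)" by (intro B(2)) auto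
      also have "\<dots> \<le> B * (L * norm (x - x0))" using 1 B(1) by (intro mult_left_mono)
      finally show ?thesis by simp
    qed
    moreover have "B * L \<ge> 0" using B(1) rL(2) by simp
    ultimately have "\<exists>r>0. \<exists>L'\<ge>0. \<forall>x. norm (x - x0) \<le> r \<longrightarrow> norm (g (A x) - g (A x0)) \<le> L' * norm (x - x0)"
      using r' by blast
    then show ?thesis using RegLp by simp
  next
    case RegL
    then obtain U L where U: "open U" "x0 \<in> U" "L-lipschitz_on U A" using reg by auto
    have L0: "L \<ge> 0" using lipschitz_on_nonneg[OF U(3)] .
    obtain e where e: "e > 0" "ball x0 e \<subseteq> U" using U open_contains_ball by blast
    define d where "d = min e (1 / (L + 1))"
    have d: "d > 0" "ball x0 d \<subseteq> U" using e L0 unfolding d_def by auto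
    have LV: "L-lipschitz_on (ball x0 d) A" using lipschitz_on_subset[OF U(3) d(2)] .
    have img: "A ` ball x0 d \<subseteq> cball (A x0) 1"
    proof
      fix y assume "y \<in> A ` ball x0 d"
      then obtain x where x: "x \<in> ball x0 d" "y = A x" by auto
      have "dist (A x0) (A x) \<le> L * dist x0 x"
        using lipschitz_onD[OF LV] x(1) d(1) by auto
      also have "\<dots> \<le> L * (1 / (L + 1))"
        using x(1) L0 unfolding d_def by (intro mult_left_mono) auto
      also have "\<dots> \<le> 1" using L0 by (simp add: field_simps)
      finally show "y \<in> cball (A x0) 1" using x by simp
    qed
    obtain B where B: "B \<ge> 0" "\<And>x z. x \<in> cball (A x0) 1 \<Longrightarrow> z \<in> cball (A x0) 1 \<Longrightarrow>
        norm (g x - g z) \<le> B * norm (x - z)"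
      using C1_loc_lip[OF g, of "A x0"] by blast
    have "B-lipschitz_on (cball (A x0) 1) g"
      using B by (intro lipschitz_onI) (auto simp: dist_norm)
    then have "B-lipschitz_on (A ` ball x0 d) g" using lipschitz_on_subset img by blast
    then have "(B * L)-lipschitz_on (ball x0 d) (\<lambda>x. g (A x))"
      by (rule lipschitz_on_compose2[OF LV])
    then show ?thesis using RegL d(1) by (auto intro!: exI[of _ "ball x0 d"])
  next
    case Reg1p
    then have "A differentiable (at x0)" using reg by simp
    moreover have "g differentiable (at (A x0))" using G(1) by (auto intro: differentiableI)
    ultimately show ?thesis using Reg1p
      using differentiable_chain_at[of A x0 g] by (simp add: o_def)
  next
    case Reg1
    then obtain U f' where U: "open U" "x0 \<in> U"
      "\<And>x. x \<in> U \<Longrightarrow> (A has_derivative blinfun_apply (f' x)) (at x)" "continuous (at x0) f'"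
      using reg by auto
    have Ac: "isCont A x0" using U(2,3) has_derivative_continuous by blast
    have der: "((\<lambda>x. g (A x)) has_derivative blinfun_apply (G (A x) o\<^sub>L f' x)) (at x)" if "x \<in> U" for x
    proof -
      have "blinfun_apply (G (A x) o\<^sub>L f' x) = blinfun_apply (G (A x)) \<circ> blinfun_apply (f' x)"
        by (rule ext) simp
      then show ?thesis using diff_chain_at[OF U(3)[OF that] G(1)[of "A x"]] by (simp add: o_def)
    qed
    have "isCont (\<lambda>x. G (A x)) x0" using continuous_at_compose[OF Ac Gc] by (simp add: o_def)
    then have "isCont (\<lambda>x. G (A x) o\<^sub>L f' x) x0"
      by (rule bounded_bilinear.continuous[OF bounded_bilinear_blinfun_compose _ U(4)])
    then show ?thesis using Reg1 U(1,2) der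
      by (auto intro!: exI[of _ U] exI[of _ "\<lambda>x. G (A x) o\<^sub>L f' x"])
  qed
qed



definition cinv :: "real^'m^'m \<Rightarrow> real^'m^'m" where
  "cinv K = (\<chi> k j. det (\<chi> i l. if l = k then (if i = j then 1 else 0) else K $ i $ l) / det K)"

lemma cinv_right:
  fixes K :: "real^'m^'m"
  assumes "det K \<noteq> 0" shows "K ** cinv K = mat 1"
proof -
  have "(K ** cinv K) $ i $ j = mat 1 $ i $ j" for i j
  proof -
    define b :: "real^'m" where "b = (\<chi> i. if i = j then 1 else 0)"
    define x :: "real^'m" where "x = (\<chi> k. cinv K $ k $ j)"
    have "x = (\<chi> k. det(\<chi> i l. if l=k then b$i else K$i$l) / det K)"
      unfolding x_def b_def cinv_def by (simp add: vec_eq_iff cong: if_cong)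
    then have "K *v x = b" using cramer[OF assms] by blast
    then have "(K *v x) $ i = b $ i" by simp
    then show ?thesis
      by (simp add: matrix_vector_mult_def matrix_matrix_mult_def x_def b_def mat_def)
  qed
  then show ?thesis by (simp add: vec_eq_iff)
qed

lemma pinv_eq:
  fixes B :: "real^'m^'m"
  assumes "B ** X = mat 1" "X ** B = mat 1"
  shows "pinv B = X"
  unfolding pinv_def
proof (rule the_equality)
  show "B ** X ** B = B \<and> X ** B ** X = X \<and> transpose (B ** X) = B ** X \<and> transpose (X ** B) = X ** B"
    using assms by simp
next
  fix Y assume "B ** Y ** B = B \<and> Y ** B ** Y = Y \<and> transpose (B ** Y) = B ** Y \<and> transpose (Y ** B) = Y ** B"
  then have h: "B ** Y ** B = B" by blast
  have "X ** (B ** Y ** B) ** X = X ** B ** X" using h by simp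
  also have "\<dots> = X" using assms by (simp add: matrix_mul_assoc[symmetric])
  finally have "X ** (B ** Y ** B) ** X = X" .
  moreover have "X ** (B ** Y ** B) ** X = (X ** B) ** Y ** (B ** X)"
    by (simp add: matrix_mul_assoc)
  ultimately show "Y = X" using assms by simp
qed

lemma mv_add: "((A::real^'n^'m) + B) *v x = A *v x + B *v x"
  by (simp add: vec_eq_iff matrix_vector_mult_def algebra_simps sum.distrib)

lemma mv_scale: "(c *\<^sub>R (A::real^'n^'m)) *v x = c *\<^sub>R (A *v x)"
  by (simp add: vec_eq_iff matrix_vector_mult_def sum_distrib_left algebra_simps)

lemma det_K_nz:
  fixes M :: "real^'n^'m"
  assumes "s \<ge> 0" "c > 0"
  shows "det (s *\<^sub>R (M ** transpose M) + c *\<^sub>R mat 1) \<noteq> 0"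
proof -
  let ?K = "s *\<^sub>R (M ** transpose M) + c *\<^sub>R mat 1"
  have "x = 0" if x: "?K *v x = 0" for x
  proof -
    have q: "x \<bullet> ((M ** transpose M) *v x) = (x v* M) \<bullet> (x v* M)"
      by (metis dot_lmul_matrix matrix_vector_mul_assoc transpose_matrix_vector)
    have "0 = x \<bullet> (?K *v x)" using x by simp
    also have "\<dots> = s * ((x v* M) \<bullet> (x v* M)) + c * (x \<bullet> x)"
      by (simp add: mv_add mv_scale inner_add_right q[symmetric])
    finally have "s * ((x v* M) \<bullet> (x v* M)) + c * (x \<bullet> x) = 0" by simp
    moreover have "s * ((x v* M) \<bullet> (x v* M)) \<ge> 0" using assms by simp
    moreover have "x \<bullet> x \<ge> 0" by simp
    ultimately have "x \<bullet> x = 0" using assms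
      by (smt (verit) mult_pos_pos)
    then show ?thesis by simp
  qed
  then have "\<exists>B. B ** ?K = mat 1" using matrix_left_invertible_ker by blast
  then show ?thesis using invertible_det_nz invertible_left_inverse by blast
qed

lemma C1_lin: "C1 (\<lambda>t::real. t * a + (1 - t) * b)"
proof -
  have "(\<lambda>t::real. t * a + (1 - t) * b) = (\<lambda>t. b + t * (a - b))" by (auto simp: algebra_simps)
  moreover have "C1 (\<lambda>t::real. b + t * (a - b))"
    by (intro C1_add C1_mult C1_const C1_bl bounded_linear_ident)
  ultimately show ?thesis by simp
qed

lemma det_MMt_nonneg:
  fixes M :: "real^'n^'m"
  shows "det (M ** transpose M) \<ge> 0"
proof (rule ccontr)
  assume neg: "\<not> ?thesis"
  define S where "S = M ** transpose M"
  define h where "h t = det (t *\<^sub>R S + (1 - t) *\<^sub>R (mat 1 :: real^'m^'m))" for t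
  have "C1 h" unfolding h_def
    by (intro C1_det) (simp add: C1_lin)
  then have hc: "continuous_on {0..1} h" using C1_cont continuous_on_subset by blast
  have h0: "h 0 = 1" by (simp add: h_def)
  have h1: "h 1 < 0" using neg by (simp add: h_def S_def)
  have "\<exists>t. 0 \<le> t \<and> t \<le> 1 \<and> h t = 0"
    by (rule IVT2'[of h 1 0 0, OF _ _ _ hc]) (use h0 h1 in auto)
  then obtain t where t: "0 \<le> t" "t \<le> 1" "h t = 0" by blast
  have "t \<noteq> 1" using t h1 by auto
  then have "h t \<noteq> 0" unfolding h_def S_def using t by (intro det_K_nz) auto
  then show False using t by simp
qed

definition gfun :: "real \<Rightarrow> nat \<Rightarrow> real^'n^'m \<Rightarrow> real^'m^'n" where
  "gfun \<mu> \<nu> M = (det (M ** transpose M) ^ \<nu>) *\<^sub>R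
     (transpose M ** cinv ((det (M ** transpose M) ^ \<nu>) *\<^sub>R (M ** transpose M) + \<mu>\<^sup>2 *\<^sub>R mat 1))"

lemma main_eq:
  fixes M :: "real^'n^'m"
  assumes mu: "\<mu> > 0"
  shows "damped_pinv M (damping \<mu> \<nu> M) = gfun \<mu> \<nu> M"
proof -
  define S where "S = M ** transpose M"
  define c where "c = det S ^ \<nu>"
  define K where "K = c *\<^sub>R S + \<mu>\<^sup>2 *\<^sub>R (mat 1 :: real^'m^'m)"
  have c0: "c \<ge> 0" unfolding c_def S_def by (intro zero_le_power det_MMt_nonneg)
  have dK: "det K \<noteq> 0" unfolding K_def S_def using det_K_nz[OF c0, of "\<mu>\<^sup>2" M] mu by simp
  have KI: "K ** cinv K = mat 1" using cinv_right[OF dK] .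
  have g: "gfun \<mu> \<nu> M = c *\<^sub>R (transpose M ** cinv K)"
    by (simp add: gfun_def K_def c_def S_def)
  show ?thesis
  proof (cases "c > 0")
    case True
    have dp: "damping \<mu> \<nu> M = ereal (sqrt (\<mu>\<^sup>2 / c))"
      using True by (simp add: damping_def c_def S_def)
    have sq: "(sqrt (\<mu>\<^sup>2 / c))\<^sup>2 = \<mu>\<^sup>2 / c" using True by simp
    have eqK: "S + (\<mu>\<^sup>2 / c) *\<^sub>R mat 1 = (1 / c) *\<^sub>R K"
      using True by (simp add: K_def scaleR_add_right)
    have r: "(S + (\<mu>\<^sup>2 / c) *\<^sub>R mat 1) ** (c *\<^sub>R cinv K) = mat 1"
      unfolding eqK using True
      by (simp add: matrix_scalar_ac scalar_matrix_assoc[symmetric] KI)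
    then have l: "(c *\<^sub>R cinv K) ** (S + (\<mu>\<^sup>2 / c) *\<^sub>R mat 1) = mat 1"
      using matrix_left_right_inverse by blast
    have "damped_pinv M (damping \<mu> \<nu> M) = transpose M ** (c *\<^sub>R cinv K)"
      unfolding damped_pinv_def dp using pinv_eq[OF r l] sq by (simp add: S_def)
    then show ?thesis using g by (simp add: matrix_scalar_ac scalar_matrix_assoc)
  next
    case False
    then have "c = 0" using c0 by simp
    then show ?thesis using False g by (simp add: damped_pinv_def damping_def c_def S_def)
  qed
qed



lemma C1_gfun:
  assumes mu: "\<mu> > 0"
  shows "C1 (gfun \<mu> \<nu> :: real^'n^'m \<Rightarrow> real^'m^'n)"
proof -
  define K :: "real^'n^'m \<Rightarrow> real^'m^'m" where
    "K M = (det (M ** transpose M) ^ \<nu>) *\<^sub>R (M ** transpose M) + \<mu>\<^sup>2 *\<^sub>R mat 1" for M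
  have S: "C1 (\<lambda>M::real^'n^'m. (M ** transpose M) $ i $ j)" for i j
    by (simp add: matrix_matrix_mult_def transpose_def) (auto intro!: C1_sum C1_mult C1_entry)
  have c: "C1 (\<lambda>M::real^'n^'m. det (M ** transpose M) ^ \<nu>)"
    by (intro C1_power C1_det S)
  have Ke: "K M $ i $ j = det (M ** transpose M) ^ \<nu> * (M ** transpose M) $ i $ j
       + \<mu>\<^sup>2 * (mat 1 :: real^'m^'m) $ i $ j" for M i j
    by (simp add: K_def)
  have KC: "C1 (\<lambda>M. K M $ i $ j)" for i j
    unfolding Ke by (intro C1_add C1_mult c S C1_const)
  have dK: "det (K M) \<noteq> 0" for M
  proof -
    have h: "det (M ** transpose M) ^ \<nu> \<ge> 0" by (intro zero_le_power det_MMt_nonneg)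
    then show ?thesis unfolding K_def using det_K_nz[OF h, of "\<mu>\<^sup>2" M] mu by simp
  qed
  have Ci: "C1 (\<lambda>M. cinv (K M) $ k $ j)" for k j
  proof -
    have e: "cinv (K M) $ k $ j = det (\<chi> i l. if l = k then (if i = j then 1 else 0) else K M $ i $ l) / det (K M)" for M
      by (simp add: cinv_def)
    have "C1 (\<lambda>M. (if b = k then (if a = j then 1 else 0) else K M $ a $ b))" for a b
      by (cases "b = k") (auto intro: C1_const KC)
    then show ?thesis unfolding e
      by (intro C1_divide C1_det dK KC) simp
  qed
  have ge: "gfun \<mu> \<nu> M $ i $ j = det (M ** transpose M) ^ \<nu> * (\<Sum>k\<in>UNIV. M $ k $ i * cinv (K M) $ k $ j)" for M i j
    by (simp add: gfun_def K_def matrix_matrix_mult_def transpose_def)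
  show ?thesis
    by (intro C1_vec) (unfold ge, intro C1_mult c C1_sum C1_entry Ci, simp)
qed

theorem lemma8:
  fixes A :: "real^'d \<Rightarrow> real^'n^'m" and x0 :: "real^'d"
    and \<mu> :: real and \<nu> :: nat and reg :: regclass
  assumes "regular_at reg A x0"
    and "\<mu> > 0"
  shows "regular_at reg (\<lambda>x. damped_pinv (A x) (damping \<mu> \<nu> (A x))) x0"
proof -
  have "(\<lambda>x. damped_pinv (A x) (damping \<mu> \<nu> (A x))) = (\<lambda>x. gfun \<mu> \<nu> (A x))"
    using main_eq[OF assms(2)] by auto
  then show ?thesis using reg_transfer[OF assms(1) C1_gfun[OF assms(2)]] by simp
qed


end
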